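(* Let $G=(V,E,\omega)\in\mathbb{G}_\pi$. Then for any nonempty $\mathcal{V}\subseteq V$, every sequence of reductions on $G$ with final vertex set $\mathcal{V}$ reduces $G$ to one and the same graph $\mathcal{R}_{\mathcal{V}}[G]=(\mathcal{V},\mathcal{E},\mu)$. Moreover, at least one such sequence of reductions always exists.
   Context: Let $\mathbb{W}$ be the field of rational functions $p(\lambda)/q(\lambda)$ in a complex variable $\lambda$, $p,q\in\mathbb{C}[\lambda]$, $q\neq0$; for $w=p/q$ put $\pi(w)=\deg p-\deg q$ (the zero function counts as $\pi\le0$). A graph $G=(V,E,\omega)$ is a finite directed graph, vertex set $V=\{v_1,\dots,v_n\}$, edges $E$ (loops allowed, at most one edge $e_{ij}$ from $v_i$ to $v_j$), weights $\omega:E\to\mathbb{W}\setminus\{0\}$, $\omega(e_{ij})=0$ if no such edge, $M(G)_{ij}=\omega(e_{ij})$. $\mathbb{G}_\pi$ is the set of graphs with $\pi(M(G)_{ij})\le0$ for all entries. $\bar S=V\setminus S$; $\ell(G)$ is $G$ without loops; $G|_U$ is an induced subgraph. A path is a sequence of distinct vertices $u_1,\dots,u_m$ ($m\ge2$) with edges $u_k\to u_{k+1}$; a cycle is the same with $u_1=u_m$, $u_1,\dots,u_{m-1}$ distinct; $u_2,\dots,u_{m-1}$ are interior. A nonempty $S\subseteq V$ is a structural set ($S\in st(G)$) if $\ell(G)|_{\bar S}$ has no cycles and $\omega(e_{ii})\ne\lambda$ for all $v_i\in\bar S$. For $v_i,v_j\in S$, $\mathcal{B}_{ij}(G;S)$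 is the set of paths or cycles from $v_i$ to $v_j$ with no interior vertex in $S$; $\mathcal{P}_\omega(u_1,\dots,u_m)=\omega(u_1u_2)\prod_{k=2}^{m-1}\frac{\omega(u_ku_{k+1})}{\lambda-\omega(u_ku_k)}$. The reduction $\mathcal{R}_S(G)$ has vertex set $S$, an edge $v_i\to v_j$ iff $\mathcal{B}_{ij}(G;S)\ne\emptyset$, of weight $\sum_{\beta\in\mathcal{B}_{ij}(G;S)}\mathcal{P}_\omega(\beta)$. Sets $S_m\subseteq\dots\subseteq S_1\subseteq V$ induce a sequence of reductions on $G$ with final vertex set $S_m$ if $S_1\in st(G)$ and, with $\mathcal{R}_1(G)=\mathcal{R}_{S_1}(G)$, $S_{i+1}\in st(\mathcal{R}_i(G))$ and $\mathcal{R}_{i+1}(G)=\mathcal{R}_{S_{i+1}}(\mathcal{R}_i(G))$ for $1\le i\le m-1$; the result is $\mathcal{R}_m(G)$. *)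

theory Defs
  imports "HOL-Computational_Algebra.Polynomial" "HOL-Computational_Algebra.Fraction_Field"
begin

type_synonym W = "complex poly fract"

definition lam :: W where "lam = Fract [:0, 1:] 1"

text \<open>pi(p/q) = deg p - deg q (well defined for nonzero w); the zero function gets 0,
  so that it counts as pi <= 0.\<close>
definition pi_deg :: "W \<Rightarrow> int" where
  "pi_deg w = (if w = 0 then 0 else
     (THE d. \<exists>p q. q \<noteq> 0 \<and> w = Fract p q \<and> d = int (degree p) - int (degree q)))"

text \<open>A graph: a finite vertex set and a weight matrix; an edge i -> j exists iff
  the weight is nonzero (weights vanish outside the vertex set).\<close>
type_synonym 'v graph = "'v set \<times> ('v \<Rightarrow> 'v \<Rightarrow> W)"

definition verts :: "'v graph \<Rightarrow> 'v set" where "verts G = fst G"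
definition wt :: "'v graph \<Rightarrow> 'v \<Rightarrow> 'v \<Rightarrow> W" where "wt G = snd G"

definition wf_graph :: "'v graph \<Rightarrow> bool" where
  "wf_graph G \<longleftrightarrow> finite (verts G) \<and>
     (\<forall>i j. wt G i j \<noteq> 0 \<longrightarrow> i \<in> verts G \<and> j \<in> verts G)"

definition in_G_pi :: "'v graph \<Rightarrow> bool" where
  "in_G_pi G \<longleftrightarrow> (\<forall>i \<in> verts G. \<forall>j \<in> verts G. pi_deg (wt G i j) \<le> 0)"

definition loopless :: "'v graph \<Rightarrow> 'v graph" where
  "loopless G = (verts G, \<lambda>i j. if i = j then 0 else wt G i j)"

definition induced :: "'v graph \<Rightarrow> 'v set \<Rightarrow> 'v graph" where
  "induced G U = (verts G \<inter> U, \<lambda>i j. if i \<in> U \<and> j \<in> U then wt G i j else 0)"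

definition edges_along :: "'v graph \<Rightarrow> 'v list \<Rightarrow> bool" where
  "edges_along G xs \<longleftrightarrow> set xs \<subseteq> verts G \<and>
     (\<forall>k. Suc k < length xs \<longrightarrow> wt G (xs ! k) (xs ! Suc k) \<noteq> 0)"

definition is_path :: "'v graph \<Rightarrow> 'v list \<Rightarrow> bool" where
  "is_path G xs \<longleftrightarrow> length xs \<ge> 2 \<and> distinct xs \<and> edges_along G xs"

definition is_cycle :: "'v graph \<Rightarrow> 'v list \<Rightarrow> bool" where
  "is_cycle G xs \<longleftrightarrow> length xs \<ge> 2 \<and> hd xs = last xs \<and> distinct (butlast xs)
     \<and> edges_along G xs"

definition interior :: "'v list \<Rightarrow> 'v set" where
  "interior xs = set (butlast (tl xs))"

definition structural_set :: "'v graph \<Rightarrow> 'v set \<Rightarrow> bool" where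
  "structural_set G S \<longleftrightarrow> S \<noteq> {} \<and> S \<subseteq> verts G \<and>
     \<not> (\<exists>xs. is_cycle (induced (loopless G) (verts G - S)) xs) \<and>
     (\<forall>i \<in> verts G - S. wt G i i \<noteq> lam)"

definition branches :: "'v graph \<Rightarrow> 'v set \<Rightarrow> 'v \<Rightarrow> 'v \<Rightarrow> 'v list set" where
  "branches G S i j = {xs. (is_path G xs \<or> is_cycle G xs) \<and> hd xs = i \<and> last xs = j
       \<and> interior xs \<inter> S = {}}"

definition path_weight :: "'v graph \<Rightarrow> 'v list \<Rightarrow> W" where
  "path_weight G xs = wt G (xs ! 0) (xs ! 1) *
     (\<Prod>k \<in> {1..<length xs - 1}.
        wt G (xs ! k) (xs ! Suc k) / (lam - wt G (xs ! k) (xs ! k)))"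

definition reduce :: "'v set \<Rightarrow> 'v graph \<Rightarrow> 'v graph" where
  "reduce S G = (S, \<lambda>i j. if i \<in> S \<and> j \<in> S
       then (\<Sum>xs \<in> branches G S i j. path_weight G xs) else 0)"

fun red_seq :: "'v graph \<Rightarrow> 'v set list \<Rightarrow> 'v graph option" where
  "red_seq G [] = Some G"
| "red_seq G (S # Ss) = (if structural_set G S then red_seq (reduce S G) Ss else None)"

definition is_red_seq :: "'v graph \<Rightarrow> 'v set list \<Rightarrow> 'v set \<Rightarrow> bool" where
  "is_red_seq G Ss U \<longleftrightarrow> Ss \<noteq> [] \<and> last Ss = U \<and>
     (\<forall>k. Suc k < length Ss \<longrightarrow> Ss ! Suc k \<subseteq> Ss ! k) \<and> red_seq G Ss \<noteq> None"

end

theory Submission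
  imports Defs
begin


definition proper :: "W \<Rightarrow> bool" where
  "proper w \<longleftrightarrow> (\<exists>p q. q \<noteq> 0 \<and> w = Fract p q \<and> degree p \<le> degree q)"

lemma proper_0: "proper 0"
  unfolding proper_def by (rule exI[of _ 0], rule exI[of _ 1]) (simp add: Zero_fract_def)

lemma proper_1: "proper 1"
  unfolding proper_def by (rule exI[of _ 1], rule exI[of _ 1]) (simp add: One_fract_def)

lemma proper_add: assumes "proper a" "proper b" shows "proper (a + b)"
proof -
  obtain p q r s where a: "q \<noteq> 0" "a = Fract p q" "degree p \<le> degree q"
    and b: "s \<noteq> 0" "b = Fract r s" "degree r \<le> degree s"
    using assms unfolding proper_def by blast
  have "a + b = Fract (p * s + r * q) (q * s)" using a b by simp
  moreover have "degree (p * s + r * q) \<le> degree (q * s)"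
  proof -
    have "degree (q * s) = degree q + degree s" using a b by (simp add: degree_mult_eq)
    moreover have "degree (p * s) \<le> degree q + degree s"
      using degree_mult_le[of p s] a by linarith
    moreover have "degree (r * q) \<le> degree q + degree s"
      using degree_mult_le[of r q] b by linarith
    ultimately show ?thesis by (metis degree_add_le)
  qed
  moreover have "q * s \<noteq> 0" using a b by simp
  ultimately show ?thesis unfolding proper_def by blast
qed

lemma proper_mult: assumes "proper a" "proper b" shows "proper (a * b)"
proof -
  obtain p q r s where a: "q \<noteq> 0" "a = Fract p q" "degree p \<le> degree q"
    and b: "s \<noteq> 0" "b = Fract r s" "degree r \<le> degree s"
    using assms unfolding proper_def by blast
  have "a * b = Fract (p * r) (q * s)" using a b by simp
  moreover have "degree (p * r) \<le> degree (q * s)"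
  proof -
    have "degree (q * s) = degree q + degree s" using a b by (simp add: degree_mult_eq)
    moreover have "degree (p * r) \<le> degree p + degree r" by (rule degree_mult_le)
    ultimately show ?thesis using a b by linarith
  qed
  moreover have "q * s \<noteq> 0" using a b by simp
  ultimately show ?thesis unfolding proper_def by blast
qed

lemma lam_minus: assumes "proper b"
  shows "\<exists>r q. q \<noteq> 0 \<and> r \<noteq> 0 \<and> lam - b = Fract r q \<and> degree r = degree q + 1"
proof -
  obtain p q where b: "q \<noteq> 0" "b = Fract p q" "degree p \<le> degree q"
    using assms unfolding proper_def by blast
  have e1: "lam - b = Fract ([:0,1:] * q - p * 1) (1 * q)" using b by (simp add: lam_def)
  have dx: "degree ([:0,1:] * q) = degree q + 1" using b
    by (simp add: degree_mult_eq)
  have e2: "degree ([:0,1:] * q - p) = degree q + 1"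
    using degree_add_eq_left[of "-p" "[:0,1:] * q"] dx b by simp
  hence e3: "[:0,1:] * q - p \<noteq> 0" by auto
  have e1': "lam - b = Fract ([:0,1:] * q - p) q" using e1 by simp
  show ?thesis apply (rule exI[of _ "[:0,1:] * q - p"], rule exI[of _ q])
    using e1' e2 e3 b(1) by simp
qed

lemma proper_div_lam: assumes "proper a" "proper b" shows "proper (a / (lam - b))"
proof -
  obtain r q where rq: "q \<noteq> 0" "r \<noteq> 0" "lam - b = Fract r q" "degree r = degree q + 1"
    using lam_minus[OF assms(2)] by blast
  obtain p s where a: "s \<noteq> 0" "a = Fract p s" "degree p \<le> degree s"
    using assms unfolding proper_def by blast
  have "a / (lam - b) = Fract (p * q) (s * r)" using a rq
    by (simp add: divide_inverse)
  moreover have "degree (p * q) \<le> degree (s * r)"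
    using degree_mult_le[of p q] a rq by (simp add: degree_mult_eq)
  moreover have "s * r \<noteq> 0" using a rq by simp
  ultimately show ?thesis unfolding proper_def by blast
qed

lemma proper_not_lam: assumes "proper b" shows "b \<noteq> lam"
proof -
  obtain r q where rq: "q \<noteq> 0" "r \<noteq> 0" "lam - b = Fract r q"
    using lam_minus[OF assms] by blast
  hence "lam - b \<noteq> 0" by (simp add: Zero_fract_def eq_fract)
  thus ?thesis by auto
qed

lemma pi_deg_rep: assumes "q \<noteq> 0" "w = Fract p q" "w \<noteq> 0"
  shows "pi_deg w = int (degree p) - int (degree q)"
proof -
  have p0: "p \<noteq> 0" using assms by (auto simp: Zero_fract_def eq_fract)
  have uniq: "d = int (degree p) - int (degree q)"
    if hd: "\<exists>p' q'. q' \<noteq> 0 \<and> w = Fract p' q' \<and> d = int (degree p') - int (degree q')" for d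
  proof -
    obtain p' q' where h: "q' \<noteq> 0" "w = Fract p' q'" "d = int (degree p') - int (degree q')"
      using hd by blast
    have e: "p * q' = p' * q" using h assms by (simp add: eq_fract)
    have "p' \<noteq> 0" using e p0 h assms by auto
    hence "degree p + degree q' = degree p' + degree q"
      using arg_cong[OF e, of degree] p0 h assms by (simp add: degree_mult_eq)
    thus ?thesis using h by linarith
  qed
  show ?thesis unfolding pi_deg_def using assms(3)
    apply simp
    apply (rule the_equality)
    using assms apply blast
    using uniq by blast
qed

lemma pi_deg_proper: "pi_deg w \<le> 0 \<longleftrightarrow> proper w"
proof (cases "w = 0")
  case True thus ?thesis by (simp add: pi_deg_def proper_0)
next
  case False
  obtain p q where pq: "w = Fract p q" "q \<noteq> 0" by (cases w) auto
  have "pi_deg w = int (degree p) - int (degree q)" using pi_deg_rep pq False by blast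
  show ?thesis
  proof
    assume "pi_deg w \<le> 0" thus "proper w" using pi_deg_rep pq False unfolding proper_def by fastforce
  next
    assume "proper w"
    then obtain p' q' where "q' \<noteq> 0" "w = Fract p' q'" "degree p' \<le> degree q'" unfolding proper_def by blast
    thus "pi_deg w \<le> 0" using pi_deg_rep False by fastforce
  qed
qed

lemma proper_sum: "(\<And>x. x \<in> A \<Longrightarrow> proper (f x)) \<Longrightarrow> proper (sum f A)"
  by (induction A rule: infinite_finite_induct) (auto simp: proper_0 proper_add)

lemma proper_prod: "(\<And>x. x \<in> A \<Longrightarrow> proper (f x)) \<Longrightarrow> proper (prod f A)"
  by (induction A rule: infinite_finite_induct) (auto simp: proper_1 proper_mult)



lemma verts_induced[simp]: "verts (induced H U) = verts H \<inter> U"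
  by (simp add: induced_def verts_def)
lemma wt_induced[simp]: "wt (induced H U) i j = (if i \<in> U \<and> j \<in> U then wt H i j else 0)"
  by (simp add: induced_def wt_def)
lemma verts_loopless[simp]: "verts (loopless H) = verts H"
  by (simp add: loopless_def verts_def)
lemma wt_loopless[simp]: "wt (loopless H) i j = (if i = j then 0 else wt H i j)"
  by (simp add: loopless_def wt_def)
lemma verts_reduce[simp]: "verts (reduce S G) = S"
  by (simp add: reduce_def verts_def)
lemma wt_reduce: "wt (reduce S G) i j = (if i \<in> S \<and> j \<in> S
       then (\<Sum>xs \<in> branches G S i j. path_weight G xs) else 0)"
  by (simp add: reduce_def wt_def)

definition Aop :: "'v graph \<Rightarrow> ('v \<Rightarrow> W) \<Rightarrow> 'v \<Rightarrow> W" where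
  "Aop G x k = lam * x k - (\<Sum>l\<in>verts G. wt G k l * x l)"

definition schur :: "'v graph \<Rightarrow> 'v set \<Rightarrow> 'v graph \<Rightarrow> bool" where
  "schur G U H \<longleftrightarrow> verts H = U \<and> U \<subseteq> verts G \<and> finite (verts G) \<and> (\<forall>i j. (i \<notin> U \<or> j \<notin> U) \<longrightarrow> wt H i j = 0) \<and>
   (\<forall>x. (\<forall>u\<in>U. x u = 0) \<longrightarrow> (\<forall>k\<in>verts G - U. Aop G x k = 0) \<longrightarrow> (\<forall>k\<in>verts G - U. x k = 0)) \<and>
   (\<forall>j\<in>U. \<exists>g. (\<forall>u\<in>U. g u = (if u = j then 1 else 0)) \<and> (\<forall>k\<in>verts G - U. Aop G g k = 0) \<and>
      (\<forall>i\<in>U. wt H i j = (if i = j then lam else 0) - Aop G g i))"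

lemma schurD: assumes "schur G U H"
  shows "verts H = U" "U \<subseteq> verts G" "finite (verts G)" "\<And>i j. (i \<notin> U \<or> j \<notin> U) \<Longrightarrow> wt H i j = 0"
   "\<And>x. (\<forall>u\<in>U. x u = 0) \<Longrightarrow> (\<forall>k\<in>verts G - U. Aop G x k = 0) \<Longrightarrow> (\<forall>k\<in>verts G - U. x k = 0)"
   "\<And>j. j\<in>U \<Longrightarrow> \<exists>g. (\<forall>u\<in>U. g u = (if u = j then 1 else 0)) \<and> (\<forall>k\<in>verts G - U. Aop G g k = 0) \<and>
      (\<forall>i\<in>U. wt H i j = (if i = j then lam else 0) - Aop G g i)"
  using assms unfolding schur_def by blast+

lemma Aop_cong: "(\<And>v. v \<in> verts G \<Longrightarrow> x v = y v) \<Longrightarrow> k \<in> verts G \<Longrightarrow> Aop G x k = Aop G y k"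
  unfolding Aop_def by simp

lemma Aop_diff: "Aop G (\<lambda>v. x v - y v) k = Aop G x k - Aop G y k"
  unfolding Aop_def by (simp add: algebra_simps sum_subtractf)

lemma Aop_sum: "Aop G (\<lambda>v. \<Sum>s\<in>I. c s * f s v) k = (\<Sum>s\<in>I. c s * Aop G (f s) k)"
proof -
  have "(\<Sum>l\<in>verts G. wt G k l * (\<Sum>s\<in>I. c s * f s l)) = (\<Sum>s\<in>I. c s * (\<Sum>l\<in>verts G. wt G k l * f s l))"
    by (simp add: sum_distrib_left algebra_simps) (rule sum.swap)
  thus ?thesis unfolding Aop_def by (simp add: sum_distrib_left algebra_simps sum_subtractf)
qed

lemma graph_eq: "verts H1 = verts H2 \<Longrightarrow> wt H1 = wt H2 \<Longrightarrow> H1 = H2"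
  unfolding verts_def wt_def by (simp add: prod_eq_iff)

lemma schur_unique: assumes "schur G U H1" "schur G U H2" shows "H1 = H2"
proof (rule graph_eq)
  show "verts H1 = verts H2" using schurD(1)[OF assms(1)] schurD(1)[OF assms(2)] by simp
  show "wt H1 = wt H2"
  proof (intro ext)
    fix i j
    show "wt H1 i j = wt H2 i j"
    proof (cases "i \<in> U \<and> j \<in> U")
      case False thus ?thesis using schurD(4)[OF assms(1)] schurD(4)[OF assms(2)] by simp
    next
      case True
      obtain g1 where g1: "\<forall>u\<in>U. g1 u = (if u = j then 1 else 0)" "\<forall>k\<in>verts G - U. Aop G g1 k = 0"
        "\<forall>i\<in>U. wt H1 i j = (if i = j then lam else 0) - Aop G g1 i"
        using schurD(6)[OF assms(1)] True by blast
      obtain g2 where g2: "\<forall>u\<in>U. g2 u = (if u = j then 1 else 0)" "\<forall>k\<in>verts G - U. Aop G g2 k = 0"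
        "\<forall>i\<in>U. wt H2 i j = (if i = j then lam else 0) - Aop G g2 i"
        using schurD(6)[OF assms(2)] True by blast
      have d1: "\<forall>u\<in>U. g1 u - g2 u = 0" using g1(1) g2(1) by simp
      have d2: "\<forall>k\<in>verts G - U. Aop G (\<lambda>v. g1 v - g2 v) k = 0" using g1(2) g2(2) by (simp add: Aop_diff)
      have d: "\<forall>k\<in>verts G - U. g1 k - g2 k = 0"
        by (rule schurD(5)[OF assms(1) d1 d2])
      have "g1 v = g2 v" if "v \<in> verts G" for v
      proof (cases "v \<in> U")
        case True thus ?thesis using g1(1) g2(1) by simp
      next
        case False thus ?thesis using d that by simp
      qed
      moreover have "i \<in> verts G" using True schurD(2)[OF assms(1)] by blast
      ultimately have "Aop G g1 i = Aop G g2 i" by (intro Aop_cong)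
      thus ?thesis using g1 g2 True by simp
    qed
  qed
qed

lemma schur_trans: assumes h1: "schur G S H1" and h2: "schur H1 U H2" shows "schur G U H2"
proof -
  have vH1: "verts H1 = S" and SV: "S \<subseteq> verts G" using schurD(1,2)[OF h1] by auto
  have vH2: "verts H2 = U" and US: "U \<subseteq> S" using schurD(1,2)[OF h2] vH1 by auto
  have ex1: "\<forall>j\<in>S. \<exists>g. (\<forall>u\<in>S. g u = (if u = j then 1 else 0)) \<and> (\<forall>k\<in>verts G - S. Aop G g k = 0) \<and>
      (\<forall>i\<in>S. wt H1 i j = (if i = j then lam else 0) - Aop G g i)" using schurD(6)[OF h1] by blast
  define gs where "gs = (\<lambda>s. SOME g. (\<forall>u\<in>S. g u = (if u = s then 1 else 0)) \<and> (\<forall>k\<in>verts G - S. Aop G g k = 0) \<and>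
      (\<forall>i\<in>S. wt H1 i s = (if i = s then lam else 0) - Aop G g i))"
  have gs: "(\<forall>u\<in>S. gs s u = (if u = s then 1 else 0)) \<and> (\<forall>k\<in>verts G - S. Aop G (gs s) k = 0) \<and>
      (\<forall>i\<in>S. wt H1 i s = (if i = s then lam else 0) - Aop G (gs s) i)" if "s \<in> S" for s
  proof -
    have e: "\<exists>g. (\<forall>u\<in>S. g u = (if u = s then 1 else 0)) \<and> (\<forall>k\<in>verts G - S. Aop G g k = 0) \<and>
      (\<forall>i\<in>S. wt H1 i s = (if i = s then lam else 0) - Aop G g i)" using ex1 that by blast
    show ?thesis unfolding gs_def by (rule someI_ex[OF e])
  qed
  note un1 = schurD(5)[OF h1]
  note un2 = schurD(5)[OF h2, unfolded vH1]
  have gs1: "gs s u = (if u = s then 1 else 0)" if "s \<in> S" "u \<in> S" for s u using gs[OF that(1)] that(2) by blast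
  have gs2: "Aop G (gs s) k = 0" if "s \<in> S" "k \<in> verts G - S" for s k using gs[OF that(1)] that(2) by blast
  have gs3: "Aop G (gs s) i = (if i = s then lam else 0) - wt H1 i s" if "s \<in> S" "i \<in> S" for s i
    using gs[OF that(1)] that(2) by (simp add: algebra_simps)
  have finS: "finite S" using schurD(2,3)[OF h1] by (meson finite_subset)
  have comb_S: "(\<Sum>s\<in>S. h s * gs s u) = h u" if "u \<in> S" for h u
  proof -
    have "(\<Sum>s\<in>S. h s * gs s u) = (\<Sum>s\<in>S. if s = u then h s else 0)"
    proof (rule sum.cong)
      fix s assume "s \<in> S" thus "h s * gs s u = (if s = u then h s else 0)" using gs1[OF _ that] by auto
    qed simp
    thus ?thesis using that finS by simp
  qed
  have comb_A: "Aop G (\<lambda>v. \<Sum>s\<in>S. h s * gs s v) k = (if k \<in> S then Aop H1 h k else 0)"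
    if "k \<in> verts G" for h k
  proof -
    have "Aop G (\<lambda>v. \<Sum>s\<in>S. h s * gs s v) k = (\<Sum>s\<in>S. h s * Aop G (gs s) k)" by (rule Aop_sum)
    also have "\<dots> = (if k \<in> S then Aop H1 h k else 0)"
    proof (cases "k \<in> S")
      case True
      have "(\<Sum>s\<in>S. h s * Aop G (gs s) k) = (\<Sum>s\<in>S. h s * ((if k = s then lam else 0) - wt H1 k s))"
        by (rule sum.cong) (simp_all add: gs3 True)
      also have "\<dots> = (\<Sum>s\<in>S. (if k = s then lam * h s else 0)) - (\<Sum>s\<in>S. wt H1 k s * h s)"
        by (subst sum_subtractf[symmetric], rule sum.cong) (auto simp: algebra_simps)
      also have "\<dots> = Aop H1 h k" using True finS vH1 by (simp add: Aop_def mult.commute)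
      finally show ?thesis using True by simp
    next
      case False
      thus ?thesis using gs2 that by (simp add: sum.neutral)
    qed
    finally show ?thesis .
  qed
  show ?thesis unfolding schur_def
  proof (intro conjI)
    show "verts H2 = U" by fact
    show "U \<subseteq> verts G" using US SV by blast
    show "finite (verts G)" using schurD(3)[OF h1] by blast
    show "\<forall>i j. i \<notin> U \<or> j \<notin> U \<longrightarrow> wt H2 i j = 0" using schurD(4)[OF h2] by blast
    show "\<forall>x. (\<forall>u\<in>U. x u = 0) \<longrightarrow> (\<forall>k\<in>verts G - U. Aop G x k = 0) \<longrightarrow> (\<forall>k\<in>verts G - U. x k = 0)"
    proof (intro allI impI)
      fix x assume xU: "\<forall>u\<in>U. x u = 0" and xA: "\<forall>k\<in>verts G - U. Aop G x k = 0"
      define y where "y = (\<lambda>v. \<Sum>s\<in>S. x s * gs s v)"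
      have a1: "\<forall>u\<in>S. x u - y u = 0" using comb_S unfolding y_def by simp
      have a2: "\<forall>k\<in>verts G - S. Aop G (\<lambda>v. x v - y v) k = 0"
          using xA US comb_A unfolding y_def by (auto simp: Aop_diff)
      have "\<forall>k\<in>verts G - S. x k - y k = 0" by (rule un1[OF a1 a2])
      hence xy: "x v = y v" if "v \<in> verts G" for v
      proof (cases "v \<in> S")
        case True thus ?thesis using a1 by simp
      next
        case False thus ?thesis using that \<open>\<forall>k\<in>verts G - S. x k - y k = 0\<close> by simp
      qed
      have b2: "\<forall>k\<in>S - U. Aop H1 x k = 0"
      proof
        fix k assume k: "k \<in> S - U"
        have "Aop G x k = Aop G y k" using xy k SV by (intro Aop_cong) auto
        also have "\<dots> = Aop H1 x k" using comb_A k SV unfolding y_def by auto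
        finally show "Aop H1 x k = 0" using xA k SV by auto
      qed
      have "\<forall>k\<in>S - U. x k = 0" by (rule un2[OF xU b2])
      hence "\<forall>s\<in>S. x s = 0" using xU by blast
      hence "\<And>v. y v = 0" unfolding y_def by simp
      thus "\<forall>k\<in>verts G - U. x k = 0" using xy by simp
    qed
    show "\<forall>j\<in>U. \<exists>g. (\<forall>u\<in>U. g u = (if u = j then 1 else 0)) \<and> (\<forall>k\<in>verts G - U. Aop G g k = 0) \<and>
      (\<forall>i\<in>U. wt H2 i j = (if i = j then lam else 0) - Aop G g i)"
    proof
      fix j assume j: "j \<in> U"
      obtain h where h: "\<forall>u\<in>U. h u = (if u = j then 1 else 0)" "\<forall>k\<in>S - U. Aop H1 h k = 0"
        "\<forall>i\<in>U. wt H2 i j = (if i = j then lam else 0) - Aop H1 h i"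
        using schurD(6)[OF h2 j, unfolded vH1] by blast
      define g where "g = (\<lambda>v. \<Sum>s\<in>S. h s * gs s v)"
      show "\<exists>g. (\<forall>u\<in>U. g u = (if u = j then 1 else 0)) \<and> (\<forall>k\<in>verts G - U. Aop G g k = 0) \<and>
        (\<forall>i\<in>U. wt H2 i j = (if i = j then lam else 0) - Aop G g i)"
      proof (intro exI[of _ g] conjI ballI)
        fix u assume "u \<in> U" thus "g u = (if u = j then 1 else 0)" using comb_S h US unfolding g_def by auto
      next
        fix k assume "k \<in> verts G - U" thus "Aop G g k = 0" using comb_A h unfolding g_def by auto
      next
        fix i assume i: "i \<in> U"
        have iS: "i \<in> S" "i \<in> verts G" using i US SV by auto
        have "Aop G g i = Aop H1 h i" unfolding g_def by (rule comb_A[OF iS(2), of h, unfolded if_P[OF iS(1)]])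
        thus "wt H2 i j = (if i = j then lam else 0) - Aop G g i"
          using h i by simp
      qed
    qed
  qed
qed



lemma cycle_exists:
  assumes fin: "finite N" and aN: "a \<in> N" and fN: "\<forall>k\<in>N. f k \<in> N \<and> R k (f k)"
  shows "\<exists>c. length c \<ge> 2 \<and> hd c = last c \<and> distinct (butlast c) \<and> set c \<subseteq> N \<and>
           (\<forall>m. Suc m < length c \<longrightarrow> R (c!m) (c!Suc m))"
proof -
  define s where "s m = (f^^m) a" for m
  have sN: "s m \<in> N" for m by (induction m) (use aN fN in \<open>auto simp: s_def\<close>)
  have sS: "s (Suc m) = f (s m)" for m by (simp add: s_def)
  have "\<not> inj_on s {0..card N}"
  proof
    assume "inj_on s {0..card N}"
    hence "card (s ` {0..card N}) = card N + 1" by (simp add: card_image)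
    moreover have "card (s ` {0..card N}) \<le> card N" using sN fin by (intro card_mono) auto
    ultimately show False by simp
  qed
  then obtain i j where "i \<noteq> j" "s i = s j" unfolding inj_on_def by blast
  hence "\<exists>j. \<exists>i<j. s i = s j" by (metis linorder_neqE_nat)
  define j0 where "j0 = (LEAST j. \<exists>i<j. s i = s j)"
  have "\<exists>i<j0. s i = s j0" unfolding j0_def by (rule LeastI_ex) fact
  then obtain i0 where i0: "i0 < j0" "s i0 = s j0" by blast
  have inj: "inj_on s {0..<j0}"
  proof (rule inj_onI)
    fix x y assume "x \<in> {0..<j0}" "y \<in> {0..<j0}" "s x = s y"
    show "x = y"
    proof (rule ccontr)
      assume "x \<noteq> y"
      hence "\<exists>i<max x y. s i = s (max x y)" using \<open>s x = s y\<close> by (metis linorder_neqE_nat max.strict_order_iff max_def)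
      hence "j0 \<le> max x y" unfolding j0_def by (rule Least_le)
      thus False using \<open>x \<in> {0..<j0}\<close> \<open>y \<in> {0..<j0}\<close> by auto
    qed
  qed
  define c where "c = map s [i0..<Suc j0]"
  have lc: "length c = Suc j0 - i0" using i0 by (simp add: c_def)
  have cn: "c ! m = s (i0 + m)" if "m < length c" for m using that by (simp add: c_def del: upt_Suc)
  show ?thesis
  proof (intro exI conjI allI impI)
    show "2 \<le> length c" using lc i0 by simp
    show "hd c = last c" using i0 by (simp add: c_def hd_map last_map)
    have "butlast c = map s [i0..<j0]" by (simp add: c_def map_butlast[symmetric])
    thus "distinct (butlast c)" using inj by (simp add: distinct_map inj_on_subset)
    show "set c \<subseteq> N" using sN by (auto simp: c_def)
    fix m assume m: "Suc m < length c"
    hence "c ! Suc m = f (c ! m)" using cn sS by simp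
    thus "R (c ! m) (c ! Suc m)" using fN sN cn m by (metis Suc_lessD)
  qed
qed

lemma no_cyc:
  assumes "structural_set G S" "set c \<subseteq> verts G - S" "length c \<ge> 2" "hd c = last c" "distinct (butlast c)"
    "\<forall>m. Suc m < length c \<longrightarrow> c!m \<noteq> c!Suc m \<and> wt G (c!m) (c!Suc m) \<noteq> 0"
  shows False
proof -
  have "is_cycle (induced (loopless G) (verts G - S)) c"
    unfolding is_cycle_def edges_along_def
  proof (intro conjI allI impI)
    show "set c \<subseteq> verts (induced (loopless G) (verts G - S))" using assms(2) by auto
    fix k assume k: "Suc k < length c"
    have "c!k \<in> verts G - S" "c ! Suc k \<in> verts G - S" using k assms(2) nth_mem by (meson Suc_lessD subsetD)+
    thus "wt (induced (loopless G) (verts G - S)) (c ! k) (c ! Suc k) \<noteq> 0"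
      using assms(2,6) k by auto
  qed (use assms in auto)
  thus False using assms(1) unfolding structural_set_def by blast
qed

lemma base_unique:
  assumes wf: "wf_graph G" and st: "structural_set G S"
    and x0: "\<forall>u\<in>S. x u = 0" and xA: "\<forall>k\<in>verts G - S. Aop G x k = 0"
  shows "\<forall>k\<in>verts G - S. x k = 0"
proof (rule ccontr)
  assume "\<not> ?thesis"
  then obtain a where a: "a \<in> verts G - S" "x a \<noteq> 0" by blast
  define N where "N = {k \<in> verts G - S. x k \<noteq> 0}"
  have finV: "finite (verts G)" using wf unfolding wf_graph_def by blast
  have fin: "finite N" unfolding N_def using finV by auto
  have ex: "\<exists>l\<in>N. k \<noteq> l \<and> wt G k l \<noteq> 0" if k: "k \<in> N" for k
  proof (rule ccontr)
    assume nl: "\<not> ?thesis"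
    have kV: "k \<in> verts G" "k \<notin> S" "x k \<noteq> 0" using k unfolding N_def by auto
    have "(\<Sum>l\<in>verts G. wt G k l * x l) = (\<Sum>l\<in>verts G. if l = k then wt G k k * x k else 0)"
    proof (rule sum.cong)
      fix l assume l: "l \<in> verts G"
      show "wt G k l * x l = (if l = k then wt G k k * x k else 0)"
      proof (cases "l = k")
        case False
        show ?thesis
        proof (cases "l \<in> S")
          case True thus ?thesis using x0 False by simp
        next
          case lS: False
          show ?thesis
          proof (cases "x l = 0")
            case False
            hence "l \<in> N" using l lS unfolding N_def by auto
            thus ?thesis using nl \<open>l \<noteq> k\<close> by auto
          qed (use \<open>l \<noteq> k\<close> in simp)
        qed
      qed simp
    qed simp
    also have "\<dots> = wt G k k * x k" using kV finV by simp
    finally have "lam * x k - wt G k k * x k = 0" using xA kV unfolding Aop_def by simp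
    hence "(lam - wt G k k) * x k = 0" by (simp add: algebra_simps)
    moreover have "wt G k k \<noteq> lam" using st kV unfolding structural_set_def by blast
    ultimately show False using kV by simp
  qed
  define f where "f k = (SOME l. l \<in> N \<and> k \<noteq> l \<and> wt G k l \<noteq> 0)" for k
  have fN: "\<forall>k\<in>N. f k \<in> N \<and> (k \<noteq> f k \<and> wt G k (f k) \<noteq> 0)"
  proof
    fix k assume "k \<in> N"
    from ex[OF this] have "\<exists>l. l \<in> N \<and> k \<noteq> l \<and> wt G k l \<noteq> 0" by blast
    thus "f k \<in> N \<and> (k \<noteq> f k \<and> wt G k (f k) \<noteq> 0)" unfolding f_def by (rule someI_ex)
  qed
  have "a \<in> N" using a unfolding N_def by auto
  from cycle_exists[where R="\<lambda>k l. k \<noteq> l \<and> wt G k l \<noteq> 0", OF fin this fN] obtain c where c: "length c \<ge> 2" "hd c = last c" "distinct (butlast c)"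
    "set c \<subseteq> N" "\<forall>m. Suc m < length c \<longrightarrow> c!m \<noteq> c!Suc m \<and> wt G (c!m) (c!Suc m) \<noteq> 0" by blast
  have "set c \<subseteq> verts G - S" using c(4) unfolding N_def by auto
  from no_cyc[OF st this c(1,2,3,5)] show False .
qed



lemma edges_along_Cons: "edges_along G (a # p) \<longleftrightarrow>
   a \<in> verts G \<and> (p \<noteq> [] \<longrightarrow> wt G a (hd p) \<noteq> 0) \<and> edges_along G p"
proof
  assume h: "edges_along G (a # p)"
  show "a \<in> verts G \<and> (p \<noteq> [] \<longrightarrow> wt G a (hd p) \<noteq> 0) \<and> edges_along G p"
  proof (intro conjI impI)
    show "a \<in> verts G" using h unfolding edges_along_def by simp
    assume "p \<noteq> []" thus "wt G a (hd p) \<noteq> 0" using h unfolding edges_along_def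
      by (metis hd_conv_nth length_Cons length_greater_0_conv nth_Cons_0 nth_Cons_Suc zero_less_Suc less_Suc_eq_0_disj Suc_less_eq)
  next
    show "edges_along G p" using h unfolding edges_along_def
      by (metis Suc_less_eq length_Cons nth_Cons_Suc set_subset_Cons subset_trans)
  qed
next
  assume h: "a \<in> verts G \<and> (p \<noteq> [] \<longrightarrow> wt G a (hd p) \<noteq> 0) \<and> edges_along G p"
  show "edges_along G (a # p)" unfolding edges_along_def
  proof (intro conjI allI impI)
    show "set (a # p) \<subseteq> verts G" using h unfolding edges_along_def by simp
    fix k assume k: "Suc k < length (a # p)"
    show "wt G ((a # p) ! k) ((a # p) ! Suc k) \<noteq> 0"
    proof (cases k)
      case 0 thus ?thesis using h k by (auto simp: hd_conv_nth)
    next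
      case (Suc k') thus ?thesis using h k unfolding edges_along_def by simp
    qed
  qed
qed

lemma interior_Cons: "p \<noteq> [] \<Longrightarrow> interior (a # p) = set (butlast p)"
  by (simp add: interior_def)

lemma set_butlast_hd: "length p \<ge> 2 \<Longrightarrow> set (butlast p) = insert (hd p) (interior p)"
  by (cases p) (auto simp: interior_def)

lemma interior_sub: "interior p \<subseteq> set p"
  unfolding interior_def by (cases p) (auto dest: in_set_butlastD)

lemma set_len2: "length p \<ge> 2 \<Longrightarrow> set p = insert (hd p) (insert (last p) (interior p))"
proof -
  assume "length p \<ge> 2"
  hence "p \<noteq> []" by auto
  hence "p = butlast p @ [last p]" by simp
  hence "set p = set (butlast p) \<union> {last p}" by (metis set_append empty_set list.simps(15) Un_insert_right sup_bot.right_neutral)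
  thus ?thesis using set_butlast_hd[OF \<open>length p \<ge> 2\<close>] by auto
qed

definition Pj :: "'v graph \<Rightarrow> 'v set \<Rightarrow> 'v \<Rightarrow> 'v \<Rightarrow> 'v list set" where
  "Pj G S j k = {p. is_path G p \<and> hd p = k \<and> last p = j \<and> interior p \<inter> S = {}}"

definition pw :: "'v graph \<Rightarrow> 'v list \<Rightarrow> W" where
  "pw G p = (\<Prod>m\<in>{0..<length p - 1}. wt G (p!m) (p!Suc m) / (lam - wt G (p!m) (p!m)))"

lemma pw_Cons: assumes "p \<noteq> []"
  shows "pw G (k # p) = wt G k (hd p) / (lam - wt G k k) * pw G p"
proof -
  obtain n where n: "length p = Suc n" using assms by (cases p) auto
  have "pw G (k # p) = (\<Prod>m\<in>{0..<Suc n}. wt G ((k#p)!m) ((k#p)!Suc m) / (lam - wt G ((k#p)!m) ((k#p)!m)))"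
    unfolding pw_def using n by simp
  also have "\<dots> = wt G k (p!0) / (lam - wt G k k) *
     (\<Prod>m\<in>{0..<n}. wt G (p!m) (p!Suc m) / (lam - wt G (p!m) (p!m)))"
    by (subst prod.atLeast0_lessThan_Suc_shift) (simp add: comp_def)
  finally show ?thesis unfolding pw_def using n assms by (simp add: hd_conv_nth)
qed

lemma pw_single: "pw G [j] = 1" by (simp add: pw_def)

lemma path_weight_Cons: assumes "p \<noteq> []"
  shows "path_weight G (i # p) = wt G i (hd p) * pw G p"
proof -
  obtain n where n: "length p = Suc n" using assms by (cases p) auto
  have "path_weight G (i # p) = wt G i (p!0) * (\<Prod>k\<in>{Suc 0..<Suc n}.
        wt G ((i#p) ! k) ((i#p) ! Suc k) / (lam - wt G ((i#p) ! k) ((i#p) ! k)))"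
    unfolding path_weight_def using n by simp
  also have "\<dots> = wt G i (p!0) * pw G p"
    unfolding pw_def n by (subst prod.atLeast_Suc_lessThan_Suc_shift) (simp add: comp_def)
  finally show ?thesis using assms by (simp add: hd_conv_nth)
qed

lemma finite_Pj: "finite (verts G) \<Longrightarrow> finite (Pj G S j k)"
  by (rule finite_subset[OF _ finite_subset_distinct[of "verts G"]])
     (auto simp: Pj_def is_path_def edges_along_def)



lemma Pj_D: assumes "q \<in> Pj G S j l"
  shows "length q \<ge> 2" "distinct q" "edges_along G q" "hd q = l" "last q = j" "interior q \<inter> S = {}"
    "set q \<subseteq> verts G"
  using assms unfolding Pj_def is_path_def edges_along_def by auto

lemma struct_SV: "structural_set G S \<Longrightarrow> S \<subseteq> verts G"
  unfolding structural_set_def by blast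

lemma Pj_butlast: assumes "q \<in> Pj G S j l" "l \<notin> S" shows "set (butlast q) \<subseteq> verts G - S"
proof -
  have "set (butlast q) = insert l (interior q)" using Pj_D[OF assms(1)] set_butlast_hd by metis
  moreover have "set (butlast q) \<subseteq> verts G" using Pj_D(7)[OF assms(1)] by (meson in_set_butlastD subset_iff)
  ultimately show ?thesis using Pj_D(6)[OF assms(1)] assms(2) by auto
qed

lemma ac:
  assumes st: "structural_set G S" and k: "k \<in> verts G - S" and l: "l \<in> verts G - S" "k \<noteq> l" "wt G k l \<noteq> 0"
    and j: "j \<in> S" and q: "q \<in> Pj G S j l"
  shows "k \<notin> set q"
proof
  assume "k \<in> set q"
  then obtain m where m: "m < length q" "q!m = k" by (auto simp: in_set_conv_nth)
  note qD = Pj_D[OF q]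
  have qne: "q \<noteq> []" using qD(1) by auto
  have m1: "m < length q - 1"
  proof (rule ccontr)
    assume "\<not> ?thesis"
    hence "m = length q - 1" using m by simp
    moreover have "q \<noteq> []" using qD(1) by auto
    ultimately have "q!m = last q" by (simp add: last_conv_nth)
    thus False using m qD(5) j k by simp
  qed
  have bl: "set (butlast q) \<subseteq> verts G - S" using Pj_butlast[OF q] l by blast
  have qi: "q!i \<in> verts G - S" if "i \<le> m" for i
  proof -
    have "i < length (butlast q)" using that m1 by simp
    hence "butlast q ! i \<in> set (butlast q)" by (rule nth_mem)
    moreover have "butlast q ! i = q ! i" using \<open>i < length (butlast q)\<close> by (simp add: nth_butlast)
    ultimately show ?thesis using bl by auto
  qed
  define c where "c = k # take (Suc m) q"
  have lc: "length c = Suc (Suc m)" using m by (simp add: c_def)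
  have c0: "c ! 0 = k" by (simp add: c_def)
  have cS: "c ! Suc i = q ! i" if "i \<le> m" for i using that m by (simp add: c_def)
  show False
  proof (rule no_cyc[OF st])
    show "set c \<subseteq> verts G - S"
    proof
      fix x assume "x \<in> set c"
      then obtain i where i: "i < length c" "c ! i = x" by (auto simp: in_set_conv_nth)
      show "x \<in> verts G - S"
      proof (cases i)
        case 0 thus ?thesis using i k c0 by simp
      next
        case (Suc i') thus ?thesis using i cS[of i'] qi[of i'] lc by simp
      qed
    qed
    show "2 \<le> length c" using lc by simp
    have cne: "c \<noteq> []" by (simp add: c_def)
    show "hd c = last c" using lc cS[of m] c0 m cne by (simp add: last_conv_nth hd_conv_nth)
    have bt: "butlast (take (Suc m) q) = take m q" using m by (simp add: butlast_take)
    have "take (Suc m) q \<noteq> []" using m by (cases q) auto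
    hence "butlast c = k # take m q" using bt by (simp add: c_def)
    moreover have "k \<notin> set (take m q)"
    proof
      assume "k \<in> set (take m q)"
      then obtain i where i: "i < m" "q ! i = k" using m by (auto simp: in_set_conv_nth)
      hence "q ! i = q ! m" using m by simp
      moreover have "i < length q" using i m by simp
      ultimately have "i = m" using qD(2) m nth_eq_iff_index_eq by blast
      thus False using i by simp
    qed
    ultimately show "distinct (butlast c)" using qD(2) by simp
    show "\<forall>i. Suc i < length c \<longrightarrow> c ! i \<noteq> c ! Suc i \<and> wt G (c ! i) (c ! Suc i) \<noteq> 0"
    proof (intro allI impI)
      fix i assume i: "Suc i < length c"
      show "c ! i \<noteq> c ! Suc i \<and> wt G (c ! i) (c ! Suc i) \<noteq> 0"
      proof (cases i)
        case 0
        have "c ! Suc 0 = l" using cS[of 0] qD(4) qne by (simp add: hd_conv_nth)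
        thus ?thesis using 0 c0 l by simp
      next
        case (Suc i')
        have "c ! i = q ! i'" "c ! Suc i = q ! Suc i'" using cS[of i'] cS[of "Suc i'"] Suc i lc by simp_all
        moreover have "Suc i' < length q" using Suc i lc m by simp
        moreover have "q ! i' \<noteq> q ! Suc i'" using qD(2) \<open>Suc i' < length q\<close> by (simp add: nth_eq_iff_index_eq)
        moreover have "wt G (q ! i') (q ! Suc i') \<noteq> 0" using qD(3) \<open>Suc i' < length q\<close> unfolding edges_along_def by blast
        ultimately show ?thesis by simp
      qed
    qed
  qed
qed



lemma is_path_Cons_iff: "is_path G (a # q) \<longleftrightarrow> length q \<ge> 1 \<and> a \<notin> set q \<and> distinct q \<and>
   a \<in> verts G \<and> wt G a (hd q) \<noteq> 0 \<and> edges_along G q"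
  unfolding is_path_def edges_along_Cons by auto

lemma E2:
  assumes st: "structural_set G S" and k: "k \<in> verts G - S" and j: "j \<in> S"
  shows "Pj G S j k = (if wt G k j \<noteq> 0 then {[k,j]} else {}) \<union>
     (\<Union>l\<in>{l\<in>verts G - S. l \<noteq> k \<and> wt G k l \<noteq> 0}. (#) k ` Pj G S j l)"
  (is "?L = ?A \<union> ?B")
proof (intro equalityI subsetI)
  fix p assume p: "p \<in> ?L"
  note pD = Pj_D[OF p]
  obtain q where pq: "p = k # q" using pD(1) pD(4) by (cases p) auto
  have qne: "q \<noteq> []" using pD(1) pq by auto
  have pe: "k \<in> verts G" "wt G k (hd q) \<noteq> 0" "edges_along G q" using pD(3) qne unfolding pq edges_along_Cons by auto
  show "p \<in> ?A \<union> ?B"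
  proof (cases "length q = 1")
    case True
    then obtain x where "q = [x]" by (cases q) auto
    hence "p = [k, j]" using pD(5) pq by simp
    thus ?thesis using pe \<open>q = [x]\<close> pD(5) pq by simp
  next
    case False
    hence lq: "length q \<ge> 2" using qne by (cases q) (auto simp: Suc_le_eq)
    define l where "l = hd q"
    have ip: "interior p = insert l (interior q)" using set_butlast_hd[OF lq] interior_Cons[OF qne] pq l_def by simp
    have "l \<in> set q" using qne l_def by simp
    hence lV: "l \<in> verts G" using pD(7) pq by auto
    have lS: "l \<notin> S" using ip pD(6) by auto
    have lk: "l \<noteq> k" using pD(2) pq \<open>l \<in> set q\<close> by auto
    have "q \<in> Pj G S j l" unfolding Pj_def is_path_def
      using lq pD(2) pe(3) l_def pD(5) pq qne ip pD(6) by auto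
    hence "p \<in> ?B" using lV lS lk pe(2) pq l_def by blast
    thus ?thesis by blast
  qed
next
  fix p assume p: "p \<in> ?A \<union> ?B"
  have SV: "S \<subseteq> verts G" using struct_SV[OF st] .
  show "p \<in> ?L"
  proof (cases "p \<in> ?A")
    case True
    hence p: "p = [k,j]" "wt G k j \<noteq> 0" by (auto split: if_splits)
    have "k \<noteq> j" using k j by auto
    thus ?thesis using p k j SV unfolding Pj_def is_path_def interior_def
      by (auto simp: edges_along_Cons edges_along_def)
  next
    case False
    then obtain l q where l: "l \<in> verts G - S" "l \<noteq> k" "wt G k l \<noteq> 0" and q: "q \<in> Pj G S j l"
      and pq: "p = k # q" using p by blast
    note qD = Pj_D[OF q]
    have kq: "k \<notin> set q" by (rule ac[OF st k l(1) l(2)[symmetric] l(3) j q])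
    have qne: "q \<noteq> []" using qD(1) by auto
    have ip: "interior p = insert l (interior q)" using set_butlast_hd[OF qD(1)] interior_Cons[OF qne] pq qD(4) by simp
    show ?thesis unfolding Pj_def
      using kq qne qD k l pq ip by (auto simp: is_path_Cons_iff)
  qed
qed

lemma E1:
  assumes st: "structural_set G S" and i: "i \<in> S" and j: "j \<in> S"
  shows "branches G S i j = (if wt G i j \<noteq> 0 then {[i,j]} else {}) \<union>
     (\<Union>k\<in>{k\<in>verts G - S. wt G i k \<noteq> 0}. (#) i ` Pj G S j k)"
  (is "?L = ?A \<union> ?B")
proof (intro equalityI subsetI)
  fix b assume b: "b \<in> ?L"
  have bb: "is_path G b \<or> is_cycle G b" "hd b = i" "last b = j" "interior b \<inter> S = {}"
    using b unfolding branches_def by auto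
  have lb: "length b \<ge> 2" and eb: "edges_along G b" using bb(1) unfolding is_path_def is_cycle_def by auto
  obtain q where bq: "b = i # q" using lb bb(2) by (cases b) auto
  have qne: "q \<noteq> []" using lb bq by auto
  have be: "i \<in> verts G" "wt G i (hd q) \<noteq> 0" "edges_along G q" using eb qne unfolding bq edges_along_Cons by auto
  show "b \<in> ?A \<union> ?B"
  proof (cases "length q = 1")
    case True
    then obtain x where "q = [x]" by (cases q) auto
    hence "b = [i, j]" using bb(3) bq by simp
    thus ?thesis using be \<open>q = [x]\<close> bb(3) bq by simp
  next
    case False
    hence lq: "length q \<ge> 2" using qne by (cases q) (auto simp: Suc_le_eq)
    define k where "k = hd q"
    have ib: "interior b = insert k (interior q)" using set_butlast_hd[OF lq] interior_Cons[OF qne] bq k_def by simp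
    have "k \<in> set q" using qne k_def by simp
    have sq: "set q \<subseteq> verts G" using be(3) unfolding edges_along_def by simp
    hence kV: "k \<in> verts G" using \<open>k \<in> set q\<close> by auto
    have kS: "k \<notin> S" using ib bb(4) by auto
    have dq: "distinct q"
    proof (cases "is_path G b")
      case True thus ?thesis using bq unfolding is_path_def by simp
    next
      case False
      hence cyc: "is_cycle G b" using bb(1) by simp
      have "distinct (butlast b)" using cyc unfolding is_cycle_def by simp
      hence "distinct (i # butlast q)" using bq qne by simp
      moreover have "hd b = last b" using cyc unfolding is_cycle_def by simp
      hence "last q = i" using bq qne by simp
      ultimately have d1: "distinct (butlast q)" "last q \<notin> set (butlast q)" by simp_all
      have "distinct (butlast q @ [last q])" using d1 by simp
      thus ?thesis using append_butlast_last_id[OF qne] by simp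
    qed
    have "q \<in> Pj G S j k" unfolding Pj_def is_path_def
      using lq dq be(3) k_def bb(3) bq qne ib bb(4) by auto
    hence "b \<in> ?B" using kV kS be(2) bq k_def by blast
    thus ?thesis by blast
  qed
next
  fix b assume b: "b \<in> ?A \<union> ?B"
  have SV: "S \<subseteq> verts G" using struct_SV[OF st] .
  show "b \<in> ?L"
  proof (cases "b \<in> ?A")
    case True
    hence b: "b = [i,j]" "wt G i j \<noteq> 0" by (auto split: if_splits)
    have "is_path G b \<or> is_cycle G b"
    proof (cases "i = j")
      case True thus ?thesis using b i SV unfolding is_cycle_def
        by (auto simp: edges_along_Cons edges_along_def)
    next
      case False thus ?thesis using b i j SV unfolding is_path_def
        by (auto simp: edges_along_Cons edges_along_def)
    qed
    thus ?thesis using b unfolding branches_def interior_def by auto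
  next
    case False
    then obtain k q where k: "k \<in> verts G - S" "wt G i k \<noteq> 0" and q: "q \<in> Pj G S j k"
      and bq: "b = i # q" using b by blast
    note qD = Pj_D[OF q]
    have qne: "q \<noteq> []" using qD(1) by auto
    have bl: "set (butlast q) \<subseteq> verts G - S" using Pj_butlast[OF q] k by blast
    hence iq: "i \<notin> set (butlast q)" using i by auto
    have ib: "interior b = set (butlast q)" using interior_Cons[OF qne] bq by simp
    have eb: "edges_along G b" using bq qD(3,4) i SV k(2) qne by (auto simp: edges_along_Cons)
    have "is_path G b \<or> is_cycle G b"
    proof (cases "i = j")
      case False
      have "set (butlast q @ [last q]) = set q" by (simp only: append_butlast_last_id[OF qne])
      hence "set q = insert (last q) (set (butlast q))" by simp
      hence "i \<notin> set q" using iq False qD(5) by auto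
      thus ?thesis using bq qD eb unfolding is_path_def by auto
    next
      case True
      have "distinct (butlast b)" using bq qne iq qD(2) by (simp add: distinct_butlast)
      moreover have "hd b = last b" using bq qne qD(5) True by simp
      ultimately show ?thesis using bq qD(1) eb unfolding is_cycle_def by auto
    qed
    thus ?thesis unfolding branches_def using bq qne qD(5) ib bl by auto
  qed
qed



definition F :: "'v graph \<Rightarrow> 'v set \<Rightarrow> 'v \<Rightarrow> 'v \<Rightarrow> W" where
  "F G S j k = (\<Sum>p\<in>Pj G S j k. pw G p)"

lemma sum_Cons_Pj:
  assumes "finite (verts G)"
  shows "sum f ((#) a ` Pj G S j l) = (\<Sum>q\<in>Pj G S j l. f (a # q))"
  by (subst sum.reindex) (auto simp: inj_on_def)

lemma F_eq:
  assumes st: "structural_set G S" and finV: "finite (verts G)" and k: "k \<in> verts G - S" and j: "j \<in> S"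
  shows "(lam - wt G k k) * F G S j k = wt G k j + (\<Sum>l\<in>verts G - S - {k}. wt G k l * F G S j l)"
proof -
  define d where "d = lam - wt G k k"
  have "wt G k k \<noteq> lam" using st k unfolding structural_set_def by blast
  hence d0: "d \<noteq> 0" by (simp add: d_def)
  define L where "L = {l\<in>verts G - S. l \<noteq> k \<and> wt G k l \<noteq> 0}"
  define A where "A = (if wt G k j \<noteq> 0 then {[k,j]} else {})"
  define B where "B = (\<Union>l\<in>L. (#) k ` Pj G S j l)"
  have finL: "finite L" using finV unfolding L_def by auto
  have finB: "finite B" unfolding B_def using finL finite_Pj[OF finV] by auto
  have finA: "finite A" unfolding A_def by auto
  have AB: "A \<inter> B = {}"
  proof (rule ccontr)
    assume "A \<inter> B \<noteq> {}"
    then obtain l q where "[k,j] = k # q" "l \<in> L" "q \<in> Pj G S j l" unfolding A_def B_def by (auto split: if_splits)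
    hence "l = j" using Pj_D(4) by fastforce
    thus False using \<open>l \<in> L\<close> j unfolding L_def by auto
  qed
  have "F G S j k = sum (pw G) A + sum (pw G) B"
    unfolding F_def E2[OF st k j] A_def[symmetric] L_def[symmetric] B_def[symmetric]
    by (rule sum.union_disjoint[OF finA finB AB])
  moreover have "sum (pw G) A = wt G k j / d"
    unfolding A_def d_def by (simp add: pw_Cons pw_single)
  moreover have "sum (pw G) B = (\<Sum>l\<in>L. wt G k l / d * F G S j l)"
  proof -
    have "sum (pw G) B = (\<Sum>l\<in>L. sum (pw G) ((#) k ` Pj G S j l))"
      unfolding B_def
    proof (rule sum.UNION_disjoint[OF finL])
      show "\<forall>i\<in>L. finite ((#) k ` Pj G S j i)" using finite_Pj[OF finV] by blast
      show "\<forall>i\<in>L. \<forall>ja\<in>L. i \<noteq> ja \<longrightarrow> (#) k ` Pj G S j i \<inter> (#) k ` Pj G S j ja = {}"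
        by (auto dest: Pj_D(4))
    qed
    also have "\<dots> = (\<Sum>l\<in>L. wt G k l / d * F G S j l)"
    proof (rule sum.cong)
      fix l assume "l \<in> L"
      have "sum (pw G) ((#) k ` Pj G S j l) = (\<Sum>q\<in>Pj G S j l. pw G (k # q))"
        by (rule sum_Cons_Pj[OF finV])
      also have "\<dots> = (\<Sum>q\<in>Pj G S j l. wt G k l / d * pw G q)"
      proof (rule sum.cong)
        fix q assume q: "q \<in> Pj G S j l"
        have "q \<noteq> []" using Pj_D(1)[OF q] by auto
        thus "pw G (k # q) = wt G k l / d * pw G q" using pw_Cons Pj_D(4)[OF q] d_def by metis
      qed simp
      finally show "sum (pw G) ((#) k ` Pj G S j l) = wt G k l / d * F G S j l"
        unfolding F_def by (simp add: sum_distrib_left)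
    qed simp
    finally show ?thesis .
  qed
  moreover have "(\<Sum>l\<in>L. wt G k l / d * F G S j l) = (\<Sum>l\<in>verts G - S - {k}. wt G k l / d * F G S j l)"
    by (rule sum.mono_neutral_left) (use finV in \<open>auto simp: L_def\<close>)
  ultimately have "F G S j k = wt G k j / d + (\<Sum>l\<in>verts G - S - {k}. wt G k l / d * F G S j l)" by simp
  hence "d * F G S j k = d * (wt G k j / d) + (\<Sum>l\<in>verts G - S - {k}. d * (wt G k l / d * F G S j l))"
    by (simp add: algebra_simps sum_distrib_left)
  also have "\<dots> = wt G k j + (\<Sum>l\<in>verts G - S - {k}. wt G k l * F G S j l)"
    using d0 by simp
  finally show ?thesis unfolding d_def .
qed

lemma reduce_eq:
  assumes st: "structural_set G S" and finV: "finite (verts G)" and i: "i \<in> S" and j: "j \<in> S"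
  shows "wt (reduce S G) i j = wt G i j + (\<Sum>k\<in>verts G - S. wt G i k * F G S j k)"
proof -
  define L where "L = {k\<in>verts G - S. wt G i k \<noteq> 0}"
  define A where "A = (if wt G i j \<noteq> 0 then {[i,j]} else {})"
  define B where "B = (\<Union>l\<in>L. (#) i ` Pj G S j l)"
  have finL: "finite L" using finV unfolding L_def by auto
  have finB: "finite B" unfolding B_def using finL finite_Pj[OF finV] by auto
  have finA: "finite A" unfolding A_def by auto
  have AB: "A \<inter> B = {}"
  proof (rule ccontr)
    assume "A \<inter> B \<noteq> {}"
    then obtain l q where "[i,j] = i # q" "l \<in> L" "q \<in> Pj G S j l" unfolding A_def B_def by (auto split: if_splits)
    hence "l = j" using Pj_D(4) by fastforce
    thus False using \<open>l \<in> L\<close> j unfolding L_def by auto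
  qed
  have "wt (reduce S G) i j = sum (path_weight G) A + sum (path_weight G) B"
    unfolding wt_reduce using i j
    unfolding E1[OF st i j] A_def[symmetric] L_def[symmetric] B_def[symmetric]
    by (simp add: sum.union_disjoint[OF finA finB AB])
  moreover have "sum (path_weight G) A = wt G i j"
    unfolding A_def by (simp add: path_weight_Cons pw_single)
  moreover have "sum (path_weight G) B = (\<Sum>l\<in>L. wt G i l * F G S j l)"
  proof -
    have "sum (path_weight G) B = (\<Sum>l\<in>L. sum (path_weight G) ((#) i ` Pj G S j l))"
      unfolding B_def
    proof (rule sum.UNION_disjoint[OF finL])
      show "\<forall>k\<in>L. finite ((#) i ` Pj G S j k)" using finite_Pj[OF finV] by blast
      show "\<forall>k\<in>L. \<forall>ja\<in>L. k \<noteq> ja \<longrightarrow> (#) i ` Pj G S j k \<inter> (#) i ` Pj G S j ja = {}"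
        by (auto dest: Pj_D(4))
    qed
    also have "\<dots> = (\<Sum>l\<in>L. wt G i l * F G S j l)"
    proof (rule sum.cong)
      fix l assume "l \<in> L"
      have "sum (path_weight G) ((#) i ` Pj G S j l) = (\<Sum>q\<in>Pj G S j l. path_weight G (i # q))"
        by (rule sum_Cons_Pj[OF finV])
      also have "\<dots> = (\<Sum>q\<in>Pj G S j l. wt G i l * pw G q)"
      proof (rule sum.cong)
        fix q assume q: "q \<in> Pj G S j l"
        have "q \<noteq> []" using Pj_D(1)[OF q] by auto
        thus "path_weight G (i # q) = wt G i l * pw G q" using path_weight_Cons Pj_D(4)[OF q] by metis
      qed simp
      finally show "sum (path_weight G) ((#) i ` Pj G S j l) = wt G i l * F G S j l"
        unfolding F_def by (simp add: sum_distrib_left)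
    qed simp
    finally show ?thesis .
  qed
  moreover have "(\<Sum>l\<in>L. wt G i l * F G S j l) = (\<Sum>l\<in>verts G - S. wt G i l * F G S j l)"
    by (rule sum.mono_neutral_left) (use finV in \<open>auto simp: L_def\<close>)
  ultimately show ?thesis by simp
qed



lemma schur_base:
  assumes wf: "wf_graph G" and st: "structural_set G S"
  shows "schur G S (reduce S G)"
proof -
  have finV: "finite (verts G)" using wf unfolding wf_graph_def by blast
  have SV: "S \<subseteq> verts G" using struct_SV[OF st] .
  have finS: "finite S" using finV SV finite_subset by blast
  show ?thesis unfolding schur_def
  proof (intro conjI)
    show "verts (reduce S G) = S" by simp
    show "S \<subseteq> verts G" by fact
    show "finite (verts G)" by fact
    show "\<forall>i j. i \<notin> S \<or> j \<notin> S \<longrightarrow> wt (reduce S G) i j = 0" by (auto simp: wt_reduce)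
    show "\<forall>x. (\<forall>u\<in>S. x u = 0) \<longrightarrow> (\<forall>k\<in>verts G - S. Aop G x k = 0) \<longrightarrow> (\<forall>k\<in>verts G - S. x k = 0)"
      using base_unique[OF wf st] by blast
    show "\<forall>j\<in>S. \<exists>g. (\<forall>u\<in>S. g u = (if u = j then 1 else 0)) \<and> (\<forall>k\<in>verts G - S. Aop G g k = 0) \<and>
      (\<forall>i\<in>S. wt (reduce S G) i j = (if i = j then lam else 0) - Aop G g i)"
    proof
      fix j assume j: "j \<in> S"
      define g where "g v = (if v \<in> S then (if v = j then 1 else 0) else F G S j v)" for v
      have sumV: "(\<Sum>l\<in>verts G. wt G a l * g l) = wt G a j + (\<Sum>l\<in>verts G - S. wt G a l * F G S j l)" for a
      proof -
        have "(\<Sum>l\<in>verts G. wt G a l * g l) = (\<Sum>l\<in>verts G - S. wt G a l * g l) + (\<Sum>l\<in>S. wt G a l * g l)"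
          using sum.subset_diff[OF SV finV] by simp
        moreover have "(\<Sum>l\<in>S. wt G a l * g l) = (\<Sum>l\<in>S. if l = j then wt G a l else 0)"
          by (rule sum.cong) (auto simp: g_def)
        moreover have "(\<Sum>l\<in>S. if l = j then wt G a l else 0) = wt G a j" using j finS by simp
        moreover have "(\<Sum>l\<in>verts G - S. wt G a l * g l) = (\<Sum>l\<in>verts G - S. wt G a l * F G S j l)"
          by (rule sum.cong) (auto simp: g_def)
        ultimately show ?thesis by simp
      qed
      show "\<exists>g. (\<forall>u\<in>S. g u = (if u = j then 1 else 0)) \<and> (\<forall>k\<in>verts G - S. Aop G g k = 0) \<and>
        (\<forall>i\<in>S. wt (reduce S G) i j = (if i = j then lam else 0) - Aop G g i)"
      proof (intro exI[of _ g] conjI ballI)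
        fix u assume "u \<in> S" thus "g u = (if u = j then 1 else 0)" by (simp add: g_def)
      next
        fix k assume k: "k \<in> verts G - S"
        have "(\<Sum>l\<in>verts G - S. wt G k l * F G S j l) = wt G k k * F G S j k + (\<Sum>l\<in>verts G - S - {k}. wt G k l * F G S j l)"
          using k finV by (simp add: sum.remove)
        moreover have "(lam - wt G k k) * F G S j k = wt G k j + (\<Sum>l\<in>verts G - S - {k}. wt G k l * F G S j l)"
          by (rule F_eq[OF st finV k j])
        moreover have "g k = F G S j k" using k by (simp add: g_def)
        ultimately show "Aop G g k = 0" unfolding Aop_def sumV by (simp add: algebra_simps)
      next
        fix i assume i: "i \<in> S"
        show "wt (reduce S G) i j = (if i = j then lam else 0) - Aop G g i"
          unfolding reduce_eq[OF st finV i j] Aop_def sumV using i by (simp add: g_def)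
      qed
    qed
  qed
qed

lemma wf_reduce: "finite S \<Longrightarrow> wf_graph (reduce S G)"
  unfolding wf_graph_def by (auto simp: wt_reduce split: if_splits)

lemma chain_tail: "\<forall>k. Suc k < length (S # Ss) \<longrightarrow> (S # Ss) ! Suc k \<subseteq> (S # Ss) ! k \<Longrightarrow>
   \<forall>k. Suc k < length Ss \<longrightarrow> Ss ! Suc k \<subseteq> Ss ! k"
  by (metis Suc_less_eq length_Cons nth_Cons_Suc)

lemma chain_le: assumes "\<forall>k. Suc k < length Ss \<longrightarrow> Ss ! Suc k \<subseteq> Ss ! k"
  shows "k < length Ss \<Longrightarrow> Ss ! k \<subseteq> Ss ! 0"
proof (induction k)
  case (Suc k) thus ?case using assms by (meson Suc_lessD subset_trans)
qed simp

lemma red_seq_schur: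
  "wf_graph G \<Longrightarrow> Ss \<noteq> [] \<Longrightarrow> (\<forall>k. Suc k < length Ss \<longrightarrow> Ss ! Suc k \<subseteq> Ss ! k) \<Longrightarrow>
   red_seq G Ss = Some H \<Longrightarrow> schur G (last Ss) H"
proof (induction Ss arbitrary: G)
  case Nil thus ?case by simp
next
  case (Cons S Ss)
  have st: "structural_set G S" using Cons.prems(4) by (simp split: if_splits)
  have rs: "red_seq (reduce S G) Ss = Some H" using Cons.prems(4) st by simp
  have sb: "schur G S (reduce S G)" by (rule schur_base[OF Cons.prems(1) st])
  show ?case
  proof (cases "Ss = []")
    case True thus ?thesis using rs sb by simp
  next
    case False
    have finS: "finite S" using schurD(2,3)[OF sb] finite_subset by blast
    have ch: "\<forall>k. Suc k < length Ss \<longrightarrow> Ss ! Suc k \<subseteq> Ss ! k" by (rule chain_tail[OF Cons.prems(3)])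
    have IH: "schur (reduce S G) (last Ss) H"
      by (rule Cons.IH[OF wf_reduce[OF finS] False ch rs])
    have "last Ss \<subseteq> Ss ! 0" using chain_le[OF ch, of "length Ss - 1"] False by (simp add: last_conv_nth)
    moreover have "Ss ! 0 \<subseteq> S" using Cons.prems(3) False by force
    ultimately have "last Ss \<subseteq> S" by blast
    have "schur G (last Ss) H" by (rule schur_trans[OF sb IH])
    thus ?thesis using False by simp
  qed
qed



lemma proper_wt: "in_G_pi G \<Longrightarrow> a \<in> verts G \<Longrightarrow> b \<in> verts G \<Longrightarrow> proper (wt G a b)"
  unfolding in_G_pi_def using pi_deg_proper by blast

lemma proper_path_weight:
  assumes pi: "in_G_pi G" and l: "length b \<ge> 2" and s: "set b \<subseteq> verts G"
  shows "proper (path_weight G b)"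
proof -
  have bV: "b ! k \<in> verts G" if "k < length b" for k using that s nth_mem by blast
  show ?thesis unfolding path_weight_def
  proof (rule proper_mult)
    have "0 < length b" "1 < length b" using l by auto
    thus "proper (wt G (b ! 0) (b ! 1))" using bV by (intro proper_wt[OF pi]) auto
    show "proper (\<Prod>k = 1..<length b - 1. wt G (b ! k) (b ! Suc k) / (lam - wt G (b ! k) (b ! k)))"
    proof (rule proper_prod)
      fix k assume "k \<in> {1..<length b - 1}"
      hence k: "k < length b" "Suc k < length b" by auto
      show "proper (wt G (b ! k) (b ! Suc k) / (lam - wt G (b ! k) (b ! k)))"
        using k bV by (intro proper_div_lam proper_wt[OF pi]) auto
    qed
  qed
qed

lemma in_G_pi_reduce:
  assumes pi: "in_G_pi G" shows "in_G_pi (reduce S G)"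
  unfolding in_G_pi_def
proof (intro ballI)
  fix i j assume "i \<in> verts (reduce S G)" "j \<in> verts (reduce S G)"
  have "proper (wt (reduce S G) i j)"
    unfolding wt_reduce
  proof (simp only: if_splits, intro conjI impI)
    show "proper (\<Sum>xs\<in>branches G S i j. path_weight G xs)"
    proof (rule proper_sum)
      fix b assume "b \<in> branches G S i j"
      hence "length b \<ge> 2" "edges_along G b" unfolding branches_def is_path_def is_cycle_def by auto
      thus "proper (path_weight G b)" using proper_path_weight[OF pi] unfolding edges_along_def by blast
    qed
    show "proper 0" by (rule proper_0)
  qed
  thus "pi_deg (wt (reduce S G) i j) \<le> 0" using pi_deg_proper by blast
qed

lemma no_cycle_small: assumes "is_cycle (induced (loopless G) A) xs" and "\<forall>a\<in>A. \<forall>b\<in>A. a = b"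
  shows False
proof -
  have l: "length xs \<ge> 2" and e: "edges_along (induced (loopless G) A) xs" using assms(1) unfolding is_cycle_def by auto
  have "set xs \<subseteq> A" using e unfolding edges_along_def by auto
  hence "xs ! 0 \<in> A" "xs ! 1 \<in> A" using l by (auto intro!: nth_mem[THEN subsetD[OF \<open>set xs \<subseteq> A\<close>]])
  hence "xs ! 0 = xs ! 1" using assms(2) by blast
  moreover have "wt (induced (loopless G) A) (xs ! 0) (xs ! Suc 0) \<noteq> 0" using e l unfolding edges_along_def by auto
  ultimately show False by (simp split: if_splits)
qed

lemma exists_seq:
  "card (verts G - U) = n \<Longrightarrow> wf_graph G \<Longrightarrow> in_G_pi G \<Longrightarrow> U \<noteq> {} \<Longrightarrow> U \<subseteq> verts G \<Longrightarrow>
   \<exists>Ss. is_red_seq G Ss U"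
proof (induction n arbitrary: G)
  case 0
  have finV: "finite (verts G)" using "0.prems"(2) unfolding wf_graph_def by blast
  hence "verts G - U = {}" using "0.prems"(1) by simp
  hence UV: "U = verts G" using "0.prems"(5) by blast
  have "structural_set G U" unfolding structural_set_def
  proof (intro conjI)
    show "\<not> (\<exists>xs. is_cycle (induced (loopless G) (verts G - U)) xs)"
    proof
      assume "\<exists>xs. is_cycle (induced (loopless G) (verts G - U)) xs"
      then obtain xs where "is_cycle (induced (loopless G) (verts G - U)) xs" by blast
      thus False by (rule no_cycle_small) (simp add: \<open>verts G - U = {}\<close>)
    qed
  qed (use "0.prems" UV in auto)
  hence "is_red_seq G [U] U" unfolding is_red_seq_def by simp
  thus ?case by blast
next
  case (Suc n)
  have finV: "finite (verts G)" using Suc.prems(2) unfolding wf_graph_def by blast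
  obtain v where v: "v \<in> verts G - U" using Suc.prems(1) by (metis card.empty ex_in_conv nat.distinct(1))
  define S where "S = verts G - {v}"
  have US: "U \<subseteq> S" using Suc.prems(5) v unfolding S_def by auto
  have VS: "verts G - S = {v}" using v unfolding S_def by auto
  have st: "structural_set G S" unfolding structural_set_def
  proof (intro conjI)
    show "S \<noteq> {}" using US Suc.prems(4) by blast
    show "S \<subseteq> verts G" unfolding S_def by blast
    show "\<not> (\<exists>xs. is_cycle (induced (loopless G) (verts G - S)) xs)"
    proof
      assume "\<exists>xs. is_cycle (induced (loopless G) (verts G - S)) xs"
      then obtain xs where "is_cycle (induced (loopless G) (verts G - S)) xs" by blast
      thus False by (rule no_cycle_small) (simp add: VS)
    qed
    show "\<forall>i\<in>verts G - S. wt G i i \<noteq> lam"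
      using VS v proper_not_lam proper_wt[OF Suc.prems(3)] by auto
  qed
  define G' where "G' = reduce S G"
  have finS: "finite S" using finV unfolding S_def by simp
  have wf': "wf_graph G'" unfolding G'_def by (rule wf_reduce[OF finS])
  have pi': "in_G_pi G'" unfolding G'_def by (rule in_G_pi_reduce[OF Suc.prems(3)])
  have "card (verts G' - U) = n"
  proof -
    have "verts G - U = insert v (verts G' - U)" using v unfolding G'_def S_def by auto
    moreover have "v \<notin> verts G' - U" unfolding G'_def S_def by simp
    ultimately show ?thesis using Suc.prems(1) finS unfolding G'_def by simp
  qed
  from Suc.IH[OF this wf' pi' Suc.prems(4)] US obtain Ss where Ss: "is_red_seq G' Ss U"
    unfolding G'_def by auto
  have Ssne: "Ss \<noteq> []" and rs: "red_seq G' Ss \<noteq> None" and lSs: "last Ss = U"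
    and ch: "\<forall>k. Suc k < length Ss \<longrightarrow> Ss ! Suc k \<subseteq> Ss ! k" using Ss unfolding is_red_seq_def by auto
  obtain S1 Ss' where S1: "Ss = S1 # Ss'" using Ssne by (cases Ss) auto
  have "structural_set G' S1" using rs S1 by (auto split: if_splits)
  hence "S1 \<subseteq> S" using struct_SV unfolding G'_def by fastforce
  have "is_red_seq G (S # Ss) U" unfolding is_red_seq_def
  proof (intro conjI)
    show "S # Ss \<noteq> []" by simp
    show "last (S # Ss) = U" using lSs Ssne by simp
    show "\<forall>k. Suc k < length (S # Ss) \<longrightarrow> (S # Ss) ! Suc k \<subseteq> (S # Ss) ! k"
    proof (intro allI impI)
      fix k assume k: "Suc k < length (S # Ss)"
      show "(S # Ss) ! Suc k \<subseteq> (S # Ss) ! k"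
      proof (cases k)
        case 0 thus ?thesis using \<open>S1 \<subseteq> S\<close> S1 by simp
      next
        case (Suc k') thus ?thesis using ch k by simp
      qed
    qed
    show "red_seq G (S # Ss) \<noteq> None" using st rs unfolding G'_def by simp
  qed
  thus ?case by blast
qed


theorem theorem3:
  fixes G :: "'v graph" and U :: "'v set"
  assumes "wf_graph G" and "in_G_pi G"
    and "U \<noteq> {}" and "U \<subseteq> verts G"
  shows "(\<exists>Ss. is_red_seq G Ss U) \<and>
         (\<exists>H. verts H = U \<and>
            (\<forall>Ss. is_red_seq G Ss U \<longrightarrow> red_seq G Ss = Some H))"
proof -
  obtain Ss0 where Ss0: "is_red_seq G Ss0 U" using exists_seq[OF refl assms] by blast
  then obtain H0 where H0: "red_seq G Ss0 = Some H0" unfolding is_red_seq_def by blast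
  have sc: "schur G U H0" using red_seq_schur[OF assms(1) _ _ H0] Ss0 unfolding is_red_seq_def by blast
  have "\<forall>Ss. is_red_seq G Ss U \<longrightarrow> red_seq G Ss = Some H0"
  proof (intro allI impI)
    fix Ss assume Ss: "is_red_seq G Ss U"
    then obtain H where H: "red_seq G Ss = Some H" unfolding is_red_seq_def by blast
    have "schur G U H" using red_seq_schur[OF assms(1) _ _ H] Ss unfolding is_red_seq_def by blast
    hence "H = H0" using schur_unique sc by blast
    thus "red_seq G Ss = Some H0" using H by simp
  qed
  moreover have "verts H0 = U" using schurD(1)[OF sc] .
  ultimately show ?thesis using Ss0 by blast
qed

end
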